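(* For all $n\ge 0$, $a(n)\equiv \lfloor n\varphi\rfloor \pmod 2$.
   Context: $\varphi=(1+\sqrt5)/2$. Let $(F_n)_{n\ge 0}$ be the Fibonacci numbers: $F_0=0$, $F_1=1$, $F_n=F_{n-1}+F_{n-2}$ for $n\ge 2$. Define $(a(n))_{n\ge 0}$ (OEIS A105774) by $a(0)=0$, $a(1)=1$, and for $n\ge 2$, $a(n)=F_{j+1}-a(n-F_j)$, where $j\ge 2$ is the unique index with $F_j<n\le F_{j+1}$. *)

theory Defs
  imports Complex_Main "HOL-Number_Theory.Fib" "HOL-Number_Theory.Cong"
begin

definition phi :: real where "phi = (1 + sqrt 5) / 2"

(* the unique index j >= 2 with F_j < n <= F_{j+1} (meaningful for n >= 2) *)
definition fib_idx :: "nat \<Rightarrow> nat" where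
  "fib_idx n = (THE j. 2 \<le> j \<and> fib j < n \<and> n \<le> fib (Suc j))"

lemma fib_strict: "2 \<le> j \<Longrightarrow> fib j < fib (Suc j)"
proof -
  assume "2 \<le> j"
  then obtain k where "j = Suc (Suc k)" by (metis add_2_eq_Suc le_Suc_ex)
  then show ?thesis using fib_neq_0_nat[of "Suc k"] by simp
qed

lemma fib_strict_mono: "2 \<le> i \<Longrightarrow> i < j \<Longrightarrow> fib i < fib j"
proof (induction j)
  case 0 then show ?case by simp
next
  case (Suc j)
  then show ?case
    by (metis fib_strict less_Suc_eq order_le_less_trans order_less_trans order.refl
        dual_order.trans less_imp_le_nat)
qed

lemma fib_ge: "k \<le> fib (Suc k)"
proof (induction k)
  case 0 then show ?case by simp
next
  case (Suc k)
  show ?case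
  proof (cases k)
    case 0 then show ?thesis by simp
  next
    case (Suc m)
    then have "fib (Suc (Suc k)) = fib (Suc k) + fib k" by simp
    moreover have "fib k \<ge> 1" using Suc fib_neq_0_nat[of k] by simp
    ultimately show ?thesis using Suc.IH by linarith
  qed
qed

lemma fib_idx_ex: "2 \<le> n \<Longrightarrow> \<exists>j. 2 \<le> j \<and> fib j < n \<and> n \<le> fib (Suc j)"
proof -
  assume n: "2 \<le> n"
  define j where "j = (LEAST j. n \<le> fib (Suc j))"
  have ex: "n \<le> fib (Suc n)" by (rule fib_ge)
  have j1: "n \<le> fib (Suc j)" unfolding j_def using ex by (rule LeastI)
  have j2: "\<And>i. i < j \<Longrightarrow> \<not> n \<le> fib (Suc i)" unfolding j_def by (rule not_less_Least)
  have "j \<ge> 2"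
  proof (rule ccontr)
    assume "\<not> 2 \<le> j"
    then have "j = 0 \<or> j = 1" by auto
    then show False using j1 n by (auto simp: numeral_2_eq_2)
  qed
  moreover have "fib j < n"
  proof -
    obtain i where "j = Suc i" using \<open>j \<ge> 2\<close> by (metis Suc_le_D numeral_2_eq_2)
    then show ?thesis using j2[of i] by simp
  qed
  ultimately show ?thesis using j1 by blast
qed

lemma fib_idx_unique:
  assumes "2 \<le> i" "fib i < n" "n \<le> fib (Suc i)" "2 \<le> j" "fib j < n" "n \<le> fib (Suc j)"
  shows "i = j"
proof (rule ccontr)
  assume "i \<noteq> j"
  then have "i < j \<or> j < i" by auto
  then show False
  proof
    assume "i < j"
    then have "Suc i \<le> j" by simp
    then have "fib (Suc i) \<le> fib j" by (rule fib_mono)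
    then show False using assms by linarith
  next
    assume "j < i"
    then have "Suc j \<le> i" by simp
    then have "fib (Suc j) \<le> fib i" by (rule fib_mono)
    then show False using assms by linarith
  qed
qed

lemma fib_idx_spec: "2 \<le> n \<Longrightarrow>
    2 \<le> fib_idx n \<and> fib (fib_idx n) < n \<and> n \<le> fib (Suc (fib_idx n))"
  unfolding fib_idx_def
  by (rule theI') (metis fib_idx_ex fib_idx_unique)

lemma fib_idx_wf: "2 \<le> n \<Longrightarrow> 0 < fib (fib_idx n) \<and> fib (fib_idx n) < n"
  using fib_idx_spec[of n] fib_neq_0_nat[of "fib_idx n"] by auto

function A105774 :: "nat \<Rightarrow> int" where
  "A105774 n = (if n = 0 then 0 else if n = 1 then 1
     else int (fib (Suc (fib_idx n))) - A105774 (n - fib (fib_idx n)))"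
  by auto
termination
proof (relation "measure id")
  fix n :: nat
  assume "\<not> n = 0" "\<not> n = 1"
  then have "2 \<le> n" by auto
  then show "(n - fib (fib_idx n), n) \<in> measure id" using fib_idx_wf[of n] by auto
qed auto

end

theory Submission
  imports Defs
begin

definition sg :: real where "sg = (sqrt 5 - 1) / 2"

lemma sqrt5_bounds: "2 < sqrt (5::real)" "sqrt (5::real) < 3"
proof -
  show "2 < sqrt (5::real)" by (rule real_less_rsqrt) simp
  have h: "sqrt 5 * sqrt 5 = (5::real)" by simp
  show "sqrt (5::real) < 3"
  proof (rule ccontr)
    assume "\<not> sqrt (5::real) < 3"
    then have "3 * 3 \<le> sqrt 5 * sqrt (5::real)" by (intro mult_mono) auto
    then show False using h by simp
  qed
qed

lemma sg_pos: "0 < sg" and sg_lt1: "sg < 1"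
  using sqrt5_bounds unfolding sg_def by auto

lemma phi_sg: "phi = 1 + sg" unfolding phi_def sg_def by (simp add: field_simps)

lemma sg_sq: "sg^2 = 1 - sg"
proof -
  have "sqrt 5 * sqrt 5 = (5::real)" by simp
  then show ?thesis unfolding sg_def power2_eq_square by (simp add: field_simps)
qed

lemma phi_sg_mult: "phi * sg = 1"
  using sg_sq unfolding phi_sg power2_eq_square by (simp add: algebra_simps)

lemma fib_phi2: "phi * fib n - fib (Suc n) = - ((-sg)^n) \<and>
   phi * fib (Suc n) - fib (Suc (Suc n)) = - ((-sg)^(Suc n))"
proof (induction n)
  case 0 then show ?case by (simp add: phi_sg)
next
  case (Suc n)
  then have h1: "phi * fib n - fib (Suc n) = - ((-sg)^n)"
    and h2: "phi * fib (Suc n) - fib (Suc (Suc n)) = - ((-sg)^(Suc n))" by auto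
  have e: "(-sg)^(Suc (Suc n)) = (-sg)^n + (-sg)^(Suc n)"
  proof -
    have "(-sg)^(Suc (Suc n)) = (-sg)^n * sg^2" by (simp add: power2_eq_square)
    also have "\<dots> = (-sg)^n * (1 - sg)" by (simp add: sg_sq)
    finally show ?thesis by (simp add: algebra_simps)
  qed
  have "phi * fib (Suc (Suc n)) - fib (Suc (Suc (Suc n)))
      = (phi * fib (Suc n) - fib (Suc (Suc n))) + (phi * fib n - fib (Suc n))"
    by (simp add: algebra_simps)
  then show ?case using h1 h2 e by simp
qed

lemma fib_phi: "phi * fib n = fib (Suc n) - (-sg)^n"
  using fib_phi2[of n] by linarith

lemma abs_pow: "\<bar>(-sg)^n\<bar> = sg^n"
  using sg_pos by (simp add: power_abs)

lemma approx:
  assumes "1 \<le> i" "0 < m" "m < int (fib (Suc i))"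
  shows "sg^i \<le> \<bar>of_int m * phi - of_int k\<bar>"
  using assms
proof (induction i arbitrary: m k)
  case 0 then show ?case by simp
next
  case (Suc i)
  show ?case
  proof (cases "i = 0")
    case True
    then show ?thesis using Suc.prems by simp
  next
    case False
    then have i1: "1 \<le> i" by simp
    show ?thesis
    proof (rule ccontr)
      assume "\<not> ?thesis"
      then have lt: "\<bar>of_int m * phi - of_int k\<bar> < sg^(Suc i)" by simp
      have si: "sg^(Suc i) + sg^(Suc (Suc i)) = sg^i"
      proof -
        have "sg^(Suc i) + sg^(Suc (Suc i)) = sg^i * (sg + sg^2)" by (simp add: algebra_simps power2_eq_square)
        then show ?thesis using sg_sq by simp
      qed
      have sile: "sg^i \<le> sg" using i1 sg_pos sg_lt1
        by (metis power_decreasing power_one_right less_imp_le)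
      have "sg * sg^i \<le> sg^i" using sg_pos sg_lt1 by (intro mult_left_le_one_le) auto
      then have ss: "sg^(Suc i) \<le> sg" using sile by simp
      have mle: "real_of_int m \<le> real (fib (Suc (Suc i))) - 1" using Suc.prems by linarith
      have F: "real (fib (Suc (Suc i))) * sg = real (fib (Suc i)) - (-sg)^(Suc (Suc i))"
        using fib_phi[of "Suc (Suc i)"] unfolding phi_sg by (simp add: algebra_simps)
      have km: "of_int (k - m) = (of_int k - of_int m * phi) + of_int m * sg"
        unfolding phi_sg by (simp add: algebra_simps)
      have ab: "\<bar>(-sg)^(Suc (Suc i))\<bar> = sg^(Suc (Suc i))" by (rule abs_pow)
      have up: "real_of_int (k - m) < real (fib (Suc i))"
      proof -
        have "of_int m * sg \<le> (real (fib (Suc (Suc i))) - 1) * sg"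
          using mle sg_pos by (simp add: mult_right_mono)
        then have "of_int m * sg \<le> real (fib (Suc i)) + sg^(Suc (Suc i)) - sg"
          using F ab by (simp add: algebra_simps)
        then show ?thesis using km lt si sile by linarith
      qed
      have lo: "0 < real_of_int (k - m)"
      proof -
        have "sg \<le> of_int m * sg" using Suc.prems sg_pos by simp
        then show ?thesis using km lt ss by linarith
      qed
      have "sg^i \<le> \<bar>of_int (k - m) * phi - of_int m\<bar>"
        using Suc.IH[OF i1, of "k - m" m] up lo by simp
      also have "of_int (k - m) * phi - of_int m = - phi * (of_int m * phi - of_int k)"
      proof -
        have e: "sg + sg * sg = 1" using sg_sq by (simp add: power2_eq_square)
        have "of_int m * (sg + sg * sg) = (of_int m :: real)" using e by simp
        then show ?thesis unfolding phi_sg by (simp add: algebra_simps)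
      qed
      finally have "sg^i \<le> phi * \<bar>of_int m * phi - of_int k\<bar>"
        using sg_pos phi_sg by (simp add: abs_mult)
      then have "sg * sg^i \<le> sg * (phi * \<bar>of_int m * phi - of_int k\<bar>)"
        using sg_pos by (simp add: mult_left_mono)
      then have "sg^(Suc i) \<le> \<bar>of_int m * phi - of_int k\<bar>"
        using phi_sg_mult by (simp add: mult.assoc[symmetric] mult.commute)
      then show False using lt by simp
    qed
  qed
qed

lemma key:
  assumes "2 \<le> j" "1 \<le> m" "m \<le> fib (j - 1)"
  shows "\<lfloor>real (m + fib j) * phi\<rfloor> = \<lfloor>real m * phi\<rfloor> + int (fib (Suc j))"
proof (cases "j = 2")
  case True
  then have m: "m = 1" using assms by (simp add: numeral_2_eq_2)
  have f1: "\<lfloor>phi\<rfloor> = 1" unfolding phi_def using sqrt5_bounds by (simp add: floor_eq_iff)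
  have f2: "\<lfloor>2 * phi\<rfloor> = 3" unfolding phi_def using sqrt5_bounds by (simp add: floor_eq_iff)
  have "fib 3 = 2" by (simp add: numeral_3_eq_3)
  then show ?thesis using True m f1 f2 by (simp add: numeral_2_eq_2)
next
  case False
  then obtain i where j: "j = Suc i" and i2: "2 \<le> i" using assms
    by (metis Suc_diff_1 Suc_le_eq add_2_eq_Suc le_antisym not_less_eq_eq numeral_2_eq_2 zero_less_Suc)
  have "fib i < fib (Suc i)" using fib_strict[OF i2] .
  then have mlt: "int m < int (fib (Suc i))" using assms j by simp
  define k where "k = \<lfloor>real m * phi\<rfloor>"
  have k1: "of_int k \<le> real m * phi" "real m * phi < of_int k + 1" unfolding k_def by linarith+
  have d1: "sg^i \<le> \<bar>of_int (int m) * phi - of_int k\<bar>"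
    using approx[of i "int m" k] i2 assms mlt by simp
  have d2: "sg^i \<le> \<bar>of_int (int m) * phi - of_int (k+1)\<bar>"
    using approx[of i "int m" "k+1"] i2 assms mlt by simp
  have a: "sg^i \<le> real m * phi - of_int k" using d1 k1 by simp
  have b: "sg^i \<le> of_int k + 1 - real m * phi" using d2 k1 by simp
  have ab: "\<bar>(-sg)^j\<bar> = sg^j" by (rule abs_pow)
  have sj: "sg^j < sg^i" using sg_pos sg_lt1 j
    by (simp add: power_strict_decreasing)
  have eq: "real (m + fib j) * phi = real m * phi + real (fib (Suc j)) - (-sg)^j"
    using fib_phi[of j] by (simp add: algebra_simps)
  show ?thesis unfolding floor_eq_iff eq k_def[symmetric]
    using a b ab sj by (simp, linarith)
qed

lemma A_0: "A105774 0 = 0" by (subst A105774.simps) simp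
lemma A_1: "A105774 (Suc 0) = 1" by (subst A105774.simps) simp
lemma A_step: "2 \<le> n \<Longrightarrow> A105774 n = int (fib (Suc (fib_idx n))) - A105774 (n - fib (fib_idx n))"
  by (subst A105774.simps) simp

declare A105774.simps[simp del]

theorem proposition17:
  fixes n :: nat
  shows "[A105774 n = \<lfloor>real n * phi\<rfloor>] (mod 2)"
proof (induction n rule: less_induct)
  case (less n)
  show ?case
  proof (cases "n \<le> 1")
    case True
    then have "n = 0 \<or> n = 1" by auto
    then show ?thesis
    proof
      assume "n = 0" then show ?thesis by (simp add: A_0)
    next
      assume n1: "n = 1"
      have "\<lfloor>phi\<rfloor> = 1" unfolding phi_def using sqrt5_bounds by (simp add: floor_eq_iff)
      then show ?thesis using n1 A_1 by simp
    qed
  next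
    case False
    then have n2: "2 \<le> n" by simp
    define j where "j = fib_idx n"
    have sp: "2 \<le> j" "fib j < n" "n \<le> fib (Suc j)" using fib_idx_spec[OF n2] unfolding j_def by auto
    define m where "m = n - fib j"
    have m1: "1 \<le> m" using sp unfolding m_def by simp
    obtain i where j: "j = Suc (Suc i)" using sp(1) by (metis add_2_eq_Suc le_Suc_ex)
    have "fib (Suc j) = fib j + fib (j - 1)" using j by simp
    then have m2: "m \<le> fib (j - 1)" using sp unfolding m_def by simp
    have nm: "n = m + fib j" using sp unfolding m_def by simp
    have K: "\<lfloor>real n * phi\<rfloor> = \<lfloor>real m * phi\<rfloor> + int (fib (Suc j))"
      using key[OF sp(1) m1 m2] nm by simp
    have A: "A105774 n = int (fib (Suc j)) - A105774 m"
      using A_step[OF n2] unfolding j_def m_def by simp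
    have "m < n" using m1 nm sp fib_idx_wf[OF n2] unfolding j_def by simp
    then have IH: "[A105774 m = \<lfloor>real m * phi\<rfloor>] (mod 2)"
      by (rule less.IH)
    then have "2 dvd (A105774 m - \<lfloor>real m * phi\<rfloor>)"
      by (simp add: cong_iff_dvd_diff)
    then obtain t where t: "A105774 m - \<lfloor>real m * phi\<rfloor> = 2 * t"
      by (elim dvdE)
    have "int (fib (Suc j)) - A105774 m - (\<lfloor>real m * phi\<rfloor> + int (fib (Suc j)))
        = 2 * (- t - \<lfloor>real m * phi\<rfloor>)" using t by (simp add: algebra_simps)
    then have "2 dvd (int (fib (Suc j)) - A105774 m - (\<lfloor>real m * phi\<rfloor> + int (fib (Suc j))))"
      by (metis dvd_triv_left)
    then show ?thesis unfolding A K by (simp add: cong_iff_dvd_diff)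
  qed
qed

end
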